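(* Let $[0,1,\dots,k]$ be a hierarchical-leadership flock, and let $x_i,v_i:[0,\infty)\to\mathbb{R}^3$ ($0\le i\le k$) satisfy \[\dot x_i=v_i,\qquad \dot v_i=\sum_{j\in\mathcal{L}(i)}a_{ij}(x)(v_j-v_i),\qquad i=1,\dots,k,\] \[\dot x_0=v_0,\qquad \dot v_0=f(t),\qquad t>0,\] with $a_{ij}(x)=H/(1+|x_i-x_j|^2)^{\beta}$ for $j\in\mathcal{L}(i)$, where $H>0$ and $0<\beta<1/2$, and where the leader's free-will acceleration satisfies $|f(t)|=O((1+t)^{-\mu})$ for some exponent $\mu>k$. Then \[\max_{0\le i,j\le k}|v_i(t)-v_j(t)|=O\big((1+t)^{-(\mu-k)}\big).\]
   Context: A flock $[0,1,\dots,k]$ is under hierarchical leadership if $j\in\mathcal{L}(i)$ (agent $i$ is led by agent $j$) only if $j<i$, and every agent $i>0$ has a nonempty leader set $\mathcal{L}(i)$; agent $0$ is the overall leader with no leaders. *)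

theory Defs
  imports "HOL-Analysis.Analysis" "HOL-Library.Landau_Symbols"
begin

definition hierarchical_leadership :: "nat \<Rightarrow> (nat \<Rightarrow> nat set) \<Rightarrow> bool" where
  "hierarchical_leadership k L \<longleftrightarrow>
     L 0 = {} \<and>
     (\<forall>i\<in>{1..k}. L i \<noteq> {} \<and> (\<forall>j\<in>L i. j < i))"

end

theory Submission
  imports Defs
begin

lemma norm_sq_deriv:
  fixes u :: "real \<Rightarrow> 'a::real_inner"
  assumes "(u has_vector_derivative u') (at t)"
  shows "((\<lambda>s. inner (u s) (u s)) has_real_derivative 2 * inner (u t) u') (at t)"
proof -
  have d: "(u has_derivative (\<lambda>h. h *\<^sub>R u')) (at t)"
    using assms by (simp add: has_vector_derivative_def)
  have "((\<lambda>s. inner (u s) (u s)) has_derivative (\<lambda>h. inner (u t) (h *\<^sub>R u') + inner (h *\<^sub>R u') (u t))) (at t)"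
    by (rule has_derivative_inner[OF d d])
  moreover have "(\<lambda>h. inner (u t) (h *\<^sub>R u') + inner (h *\<^sub>R u') (u t)) = (\<lambda>h. (2 * inner (u t) u') * h)"
    by (auto simp: inner_commute algebra_simps)
  ultimately show ?thesis by (simp add: has_field_derivative_def)
qed

lemma barrier_scalar:
  fixes d :: "real \<Rightarrow> real"
  assumes cont: "continuous_on {T..} d" and d0: "d T < 0"
    and der: "\<And>t. t > T \<Longrightarrow> d t = 0 \<Longrightarrow> \<exists>D. (d has_real_derivative D) (at t) \<and> D < 0"
  shows "\<And>t. t \<ge> T \<Longrightarrow> d t < 0"
proof (rule ccontr)
  fix t2 assume t2: "t2 \<ge> T" and "\<not> d t2 < 0"
  hence dt2: "d t2 \<ge> 0" by simp
  define S where "S = {t \<in> {T..t2}. d t \<ge> 0}"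
  have c2: "continuous_on {T..t2} d" using cont by (rule continuous_on_subset) auto
  have "closed S" unfolding S_def
    using continuous_closed_preimage[OF c2, of "{0..}"] by (simp add: vimage_def Int_def)
  hence "compact S" by (metis (no_types, lifting) S_def bounded_closed_interval bounded_subset compact_eq_bounded_closed mem_Collect_eq subsetI)
  moreover have "S \<noteq> {}" using t2 dt2 unfolding S_def by auto
  ultimately obtain t1 where t1S: "t1 \<in> S" and t1min: "\<And>s. s \<in> S \<Longrightarrow> t1 \<le> s"
    using compact_attains_inf by metis
  have t1: "T \<le> t1" "t1 \<le> t2" "d t1 \<ge> 0" using t1S by (auto simp: S_def)
  have "t1 \<noteq> T" using t1 d0 by auto
  hence t1T: "t1 > T" using t1 by simp
  have neg: "\<And>s. T \<le> s \<Longrightarrow> s < t1 \<Longrightarrow> d s < 0"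
    using t1min t1 unfolding S_def by force
  have "d t1 = 0"
  proof (rule ccontr)
    assume "d t1 \<noteq> 0" hence "d T \<le> 0" "0 \<le> d t1" using t1 d0 by auto
    moreover have "continuous_on {T..t1} d" using cont by (rule continuous_on_subset) auto
    ultimately obtain s where "T \<le> s" "s \<le> t1" "d s = 0" using IVT'[of d T 0 t1] t1T by auto
    thus False using neg \<open>d t1 \<noteq> 0\<close> by (cases "s = t1") force+
  qed
  then obtain D where D: "(d has_real_derivative D) (at t1)" "D < 0" using der t1T by blast
  from DERIV_neg_dec_left[OF D] obtain e where e: "e > 0" "\<And>h. h > 0 \<Longrightarrow> h < e \<Longrightarrow> d t1 < d (t1 - h)" by blast
  define h where "h = min (e/2) ((t1 - T)/2)"
  have "h > 0" "h < e" using e t1T by (auto simp: h_def)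
  hence p: "d (t1 - h) > 0" using e \<open>d t1 = 0\<close> by force
  have "h \<le> (t1 - T)/2" unfolding h_def by (rule min.cobounded2)
  hence "T \<le> t1 - h" using t1T by (simp add: field_simps)
  hence "d (t1 - h) < 0" using \<open>h > 0\<close> by (intro neg) auto
  with p show False by simp
qed

lemma barrier_norm:
  fixes u :: "real \<Rightarrow> 'a::real_inner" and \<Phi> :: "real \<Rightarrow> real"
  assumes du: "\<And>t. t \<ge> T \<Longrightarrow> (u has_vector_derivative u' t) (at t)"
    and d\<Phi>: "\<And>t. t \<ge> T \<Longrightarrow> (\<Phi> has_real_derivative \<Phi>' t) (at t)"
    and pos: "\<And>t. t \<ge> T \<Longrightarrow> \<Phi> t > 0"
    and init: "norm (u T) < \<Phi> T"
    and cross: "\<And>t. t > T \<Longrightarrow> norm (u t) = \<Phi> t \<Longrightarrow> inner (u t) (u' t) < \<Phi> t * \<Phi>' t"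
  shows "\<And>t. t \<ge> T \<Longrightarrow> norm (u t) < \<Phi> t"
proof -
  define d where "d = (\<lambda>t. inner (u t) (u t) - (\<Phi> t)^2)"
  have dd: "(d has_real_derivative 2 * inner (u t) (u' t) - 2 * \<Phi> t * \<Phi>' t) (at t)" if "t \<ge> T" for t
    unfolding d_def using norm_sq_deriv[OF du[OF that]] d\<Phi>[OF that]
    by (auto intro!: derivative_eq_intros)
  have "continuous_on {T..} d"
    by (rule DERIV_continuous_on[of _ _ "\<lambda>t. 2 * inner (u t) (u' t) - 2 * \<Phi> t * \<Phi>' t"]) (use dd in \<open>auto intro: has_field_derivative_at_within\<close>)
  moreover have "d T < 0"
  proof -
    have "(norm (u T))^2 < (\<Phi> T)^2" by (rule power_strict_mono) (use init in auto)
    thus ?thesis by (simp add: d_def power2_norm_eq_inner)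
  qed
  moreover have "\<exists>D. (d has_real_derivative D) (at t) \<and> D < 0" if "t > T" "d t = 0" for t
  proof -
    have "(norm (u t))^2 = (\<Phi> t)^2" using that(2) by (simp add: d_def power2_norm_eq_inner)
    hence "norm (u t) = \<Phi> t" using pos[of t] that(1) by (simp add: power2_eq_iff_nonneg)
    thus ?thesis using dd[of t] cross[of t] that(1) by (intro exI[of _ "2 * inner (u t) (u' t) - 2 * \<Phi> t * \<Phi>' t"]) auto
  qed
  ultimately have neg: "\<And>t. t \<ge> T \<Longrightarrow> d t < 0" by (rule barrier_scalar)
  fix t assume t: "t \<ge> T"
  have "(norm (u t))^2 < (\<Phi> t)^2" using neg[OF t] by (simp add: d_def power2_norm_eq_inner)
  thus "norm (u t) < \<Phi> t" using pos[OF t] by (simp add: power2_less_imp_less)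
qed


lemma key_alg:
  fixes Mi s y G c z q :: real
  assumes "Mi > 0" "s > 0" "y > 0" "G < Mi" "c * z \<ge> q + 1"
  shows "Mi * s * (G * (s / y)) - c * (z / y) * (Mi * s)^2 < Mi * s * (Mi * (-q) * (s / y))"
proof -
  have "c * z * Mi \<ge> (q + 1) * Mi" using assms by (intro mult_right_mono) auto
  hence "G - c * z * Mi + q * Mi < 0" using assms by (simp add: algebra_simps)
  moreover have "Mi * s^2 / y > 0" using assms by simp
  ultimately have "(Mi * s^2 / y) * (G - c * z * Mi + q * Mi) < 0" using mult_pos_neg by blast
  moreover have "Mi * s * (G * (s / y)) - c * (z / y) * (Mi * s)^2 - Mi * s * (Mi * (-q) * (s / y))
     = (Mi * s^2 / y) * (G - c * z * Mi + q * Mi)"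
    by (simp add: algebra_simps power2_eq_square add_divide_distrib diff_divide_distrib)
  ultimately show ?thesis by linarith
qed

lemma powr_m1:
  fixes y q :: real assumes "y > 0"
  shows "y powr (-q - 1) = y powr (-q) / y"
  using assms by (simp add: powr_diff)

theorem theorem6:
  fixes k :: nat and L :: "nat \<Rightarrow> nat set"
    and x v :: "nat \<Rightarrow> real \<Rightarrow> real^3" and f :: "real \<Rightarrow> real^3"
    and H \<beta> \<mu> :: real
  assumes hier: "hierarchical_leadership k L"
    and H: "H > 0" and beta: "0 < \<beta>" "\<beta> < 1/2"
    and cont_x: "\<And>i. i \<le> k \<Longrightarrow> continuous_on {0..} (x i)"
    and cont_v: "\<And>i. i \<le> k \<Longrightarrow> continuous_on {0..} (v i)"
    and dx: "\<And>i t. i \<le> k \<Longrightarrow> t > 0 \<Longrightarrow> (x i has_vector_derivative v i t) (at t)"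
    and dv: "\<And>i t. 1 \<le> i \<Longrightarrow> i \<le> k \<Longrightarrow> t > 0 \<Longrightarrow>
              (v i has_vector_derivative
                 (\<Sum>j\<in>L i. (H / (1 + (norm (x i t - x j t))\<^sup>2) powr \<beta>) *\<^sub>R (v j t - v i t))) (at t)"
    and dv0: "\<And>t. t > 0 \<Longrightarrow> (v 0 has_vector_derivative f t) (at t)"
    and mu: "\<mu> > real k"
    and f_decay: "(\<lambda>t. norm (f t)) \<in> O[at_top](\<lambda>t. (1 + t) powr (-\<mu>))"
  shows "(\<lambda>t. MAX i\<in>{0..k}. MAX j\<in>{0..k}. norm (v i t - v j t))
           \<in> O[at_top](\<lambda>t. (1 + t) powr (-(\<mu> - real k)))"
proof (cases "k = 0")
  case True
  show ?thesis by (rule bigoI[of _ 0]) (simp add: True)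
next
  case False
  hence k1: "k \<ge> 1" by simp
  hence mu1: "\<mu> > 1" using mu by linarith
  have Lfacts: "L i \<noteq> {}" "finite (L i)" "L i \<subseteq> {..<i}" "card (L i) \<le> k"
    if "1 \<le> i" "i \<le> k" for i
  proof -
    show ne: "L i \<noteq> {}" and sub: "L i \<subseteq> {..<i}" using hier that unfolding hierarchical_leadership_def by auto
    show "finite (L i)" using sub finite_subset by blast
    have "card (L i) \<le> card {..<i}" using sub by (intro card_mono) auto
    thus "card (L i) \<le> k" using that by simp
  qed
  define a where "a = (\<lambda>i j t. H / (1 + (norm (x i t - x j t))\<^sup>2) powr \<beta>)"
  have a_pos: "a i j t > 0" and a_le: "a i j t \<le> H" for i j t
  proof -
    have ge1: "(1 + (norm (x i t - x j t))\<^sup>2) powr \<beta> \<ge> 1"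
      using beta by (intro ge_one_powr_ge_zero) auto
    thus "a i j t > 0" using H unfolding a_def by (intro divide_pos_pos) auto
    show "a i j t \<le> H" using H ge1 unfolding a_def by (auto simp: divide_le_eq)
  qed
  have dvi: "(v i has_vector_derivative (\<Sum>j\<in>L i. a i j t *\<^sub>R (v j t - v i t))) (at t)"
    if "1 \<le> i" "i \<le> k" "t > 0" for i t
    using dv[OF that] unfolding a_def .
  obtain F0 where F0: "F0 > 0" "eventually (\<lambda>t. norm (norm (f t)) \<le> F0 * norm ((1 + t) powr (-\<mu>))) at_top"
    using landau_o.bigE[OF f_decay] by blast
  then obtain N where N: "\<And>t. t \<ge> N \<Longrightarrow> norm (norm (f t)) \<le> F0 * norm ((1 + t) powr (-\<mu>))"
    by (auto simp: eventually_at_top_linorder)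
  define T0 where "T0 = max N 1"
  define F where "F = F0"
  have T0: "T0 \<ge> 1" by (simp add: T0_def)
  have fbound: "norm (f t) \<le> F * (1 + t) powr (-\<mu>)" if "t \<ge> T0" for t
    using N[of t] that by (simp add: T0_def F_def)
  have Fpos: "F > 0" using F0 by (simp add: F_def)
  have "\<exists>M0. \<forall>t\<ge>T0. norm (v 0 t) \<le> M0"
  proof -
    define C where "C = 2 * F / (\<mu> - 1)"
    define M0 where "M0 = norm (v 0 T0) + C + 1"
    define \<Phi> where "\<Phi> = (\<lambda>t. M0 - C * (1 + t) powr (1 - \<mu>))"
    have Cpos: "C > 0" using Fpos mu1 by (simp add: C_def)
    have pw: "(1 + t) powr (1 - \<mu>) \<le> 1" "(1 + t) powr (1 - \<mu>) > 0" if "t \<ge> 0" for t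
    proof -
      have "(1 + t) powr (1 - \<mu>) \<le> (1 + t) powr 0" using that mu1 by (intro powr_mono) auto
      thus "(1 + t) powr (1 - \<mu>) \<le> 1" using that by simp
      show "(1 + t) powr (1 - \<mu>) > 0" using that by simp
    qed
    have \<Phi>: "\<Phi> t > 0" "\<Phi> t \<le> M0" "\<Phi> t \<ge> norm (v 0 T0) + 1" if "t \<ge> T0" for t
    proof -
      have "C * (1 + t) powr (1 - \<mu>) \<le> C * 1"
        using pw[of t] that T0 Cpos by (intro mult_left_mono) auto
      moreover have "C * (1 + t) powr (1 - \<mu>) \<ge> 0"
        using pw[of t] that T0 Cpos by simp
      ultimately show "\<Phi> t > 0" "\<Phi> t \<le> M0" "\<Phi> t \<ge> norm (v 0 T0) + 1"
        unfolding \<Phi>_def M0_def using norm_ge_zero[of "v 0 T0"] by linarith+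
    qed
    have d\<Phi>: "(\<Phi> has_real_derivative 2 * F * (1 + t) powr (-\<mu>)) (at t)" if "t \<ge> T0" for t
    proof -
      have "((\<lambda>t. (1 + t) powr (1 - \<mu>)) has_real_derivative (1 - \<mu>) * (1 + t) powr (1 - \<mu> - 1) * 1) (at t)"
        using that T0 by (auto intro!: derivative_eq_intros)
      hence "(\<Phi> has_real_derivative - (C * ((1 - \<mu>) * (1 + t) powr (1 - \<mu> - 1) * 1))) (at t)"
        unfolding \<Phi>_def using that T0 by (auto intro!: derivative_eq_intros)
      moreover have "- (C * ((1 - \<mu>) * (1 + t) powr (1 - \<mu> - 1) * 1)) = 2 * F * (1 + t) powr (-\<mu>)"
        using mu1 by (simp add: C_def field_simps)
      ultimately show ?thesis by simp
    qed
    have "norm (v 0 t) < \<Phi> t" if "t \<ge> T0" for t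
    proof (rule barrier_norm[where u' = f and \<Phi>' = "\<lambda>t. 2 * F * (1 + t) powr (-\<mu>)", OF _ d\<Phi> \<Phi>(1) _ _ that])
      show "(v 0 has_vector_derivative f t) (at t)" if "T0 \<le> t" for t using dv0 that T0 by simp
      show "norm (v 0 T0) < \<Phi> T0" using \<Phi>(3)[of T0] by simp
      fix t assume t: "T0 < t" "norm (v 0 t) = \<Phi> t"
      have "inner (v 0 t) (f t) \<le> norm (v 0 t) * norm (f t)" by (rule norm_cauchy_schwarz)
      also have "\<dots> \<le> \<Phi> t * (F * (1 + t) powr (-\<mu>))"
        using t fbound[of t] \<Phi>(1)[of t] by (simp add: mult_left_mono)
      also have "\<dots> < \<Phi> t * (2 * F * (1 + t) powr (-\<mu>))"
        using t \<Phi>(1)[of t] Fpos T0 by (intro mult_strict_left_mono) auto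
      finally show "inner (v 0 t) (f t) < \<Phi> t * (2 * F * (1 + t) powr (-\<mu>))" .
    qed
    thus ?thesis using \<Phi>(2) by (meson less_imp_le order_trans)
  qed
  then obtain M0 where M0: "\<And>t. t \<ge> T0 \<Longrightarrow> norm (v 0 t) \<le> M0" by blast
  have "\<forall>n. n \<le> k \<longrightarrow> (\<exists>B. \<forall>j\<le>n. \<forall>t\<ge>T0. norm (v j t) \<le> B)"
  proof (intro allI)
    fix n show "n \<le> k \<longrightarrow> (\<exists>B. \<forall>j\<le>n. \<forall>t\<ge>T0. norm (v j t) \<le> B)"
    proof (induction n)
      case 0 show ?case using M0 by auto
    next
      case (Suc n)
      show ?case
      proof
        assume nk: "Suc n \<le> k"
        then obtain B where B: "\<And>j t. j \<le> n \<Longrightarrow> t \<ge> T0 \<Longrightarrow> norm (v j t) \<le> B" using Suc.IH by auto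
        define i where "i = Suc n"
        have i: "1 \<le> i" "i \<le> k" using nk by (auto simp: i_def)
        define M where "M = max B (norm (v i T0)) + 1"
        have Mpos: "M > 0" "M > B" "M > norm (v i T0)" unfolding M_def
          using norm_ge_zero[of "v i T0"] by linarith+
        have bnd: "norm (v i t) < M" if "t \<ge> T0" for t
        proof (rule barrier_norm[where u' = "\<lambda>t. \<Sum>j\<in>L i. a i j t *\<^sub>R (v j t - v i t)"
              and \<Phi> = "\<lambda>_. M" and \<Phi>' = "\<lambda>_. 0", OF _ _ _ _ _ that])
          show "(v i has_vector_derivative (\<Sum>j\<in>L i. a i j t *\<^sub>R (v j t - v i t))) (at t)"
            if "T0 \<le> t" for t using dvi[OF i, of t] that T0 by simp
          show "((\<lambda>_. M) has_real_derivative 0) (at t)" for t by simp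
          show "M > 0" for t using Mpos by simp
          show "norm (v i T0) < M" using Mpos by simp
          fix t assume t: "T0 < t" "norm (v i t) = M"
          have ii: "inner (v i t) (v i t) = M^2" using t(2) by (simp add: power2_norm_eq_inner[symmetric])
          have "inner (v i t) (\<Sum>j\<in>L i. a i j t *\<^sub>R (v j t - v i t))
              = (\<Sum>j\<in>L i. a i j t * (inner (v i t) (v j t) - M^2))"
            by (simp add: inner_sum_right inner_diff_right ii)
          also have "\<dots> = - (\<Sum>j\<in>L i. a i j t * (M^2 - inner (v i t) (v j t)))"
            by (simp add: sum_negf[symmetric] algebra_simps)
          also have "\<dots> < 0"
          proof -
            have "0 < (\<Sum>j\<in>L i. a i j t * (M^2 - inner (v i t) (v j t)))"
            proof (rule sum_pos)
              show "finite (L i)" "L i \<noteq> {}" using Lfacts[OF i] by auto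
              fix j assume j: "j \<in> L i"
              hence jn: "j \<le> n" using Lfacts(3)[OF i] by (auto simp: i_def)
              have "inner (v i t) (v j t) \<le> norm (v i t) * norm (v j t)" by (rule norm_cauchy_schwarz)
              also have "\<dots> \<le> M * B" using t B[OF jn, of t] Mpos by (simp add: mult_left_mono)
              also have "\<dots> < M * M" using Mpos by simp
              finally have "M^2 - inner (v i t) (v j t) > 0" by (simp add: power2_eq_square)
              thus "0 < a i j t * (M^2 - inner (v i t) (v j t))" using a_pos by simp
            qed
            thus ?thesis by simp
          qed
          finally show "inner (v i t) (\<Sum>j\<in>L i. a i j t *\<^sub>R (v j t - v i t)) < M * 0" by simp
        qed
        show "\<exists>B. \<forall>j\<le>Suc n. \<forall>t\<ge>T0. norm (v j t) \<le> B"
        proof (intro exI[of _ "max B M"] allI impI)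
          fix j t assume j: "j \<le> Suc n" and t: "T0 \<le> t"
          show "norm (v j t) \<le> max B M"
          proof (cases "j = Suc n")
            case True thus ?thesis using bnd[OF t] by (simp add: i_def)
          next
            case False thus ?thesis using B[of j t] j t by simp
          qed
        qed
      qed
    qed
  qed
  from this[rule_format, OF order_refl] obtain B0 where B0: "\<And>j t. j \<le> k \<Longrightarrow> t \<ge> T0 \<Longrightarrow> norm (v j t) \<le> B0" by blast
  define B where "B = max B0 0"
  have B: "\<And>j t. j \<le> k \<Longrightarrow> t \<ge> T0 \<Longrightarrow> norm (v j t) \<le> B" "B \<ge> 0"
    using B0 by (auto simp: B_def intro: le_max_iff_disj[THEN iffD2])
  define S where "S = (\<Sum>l\<le>k. norm (x l T0))"
  define K0 where "K0 = 2 * S + 2 * B + 2"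
  have Snn: "S \<ge> 0" unfolding S_def by (simp add: sum_nonneg)
  have xS: "norm (x l T0) \<le> S" if "l \<le> k" for l
    unfolding S_def using that by (intro member_le_sum) auto
  have xgrow: "norm (x i t - x j t) \<le> K0 * (1 + t)" if ij: "i \<le> k" "j \<le> k" and tt: "t \<ge> T0" for i j t
  proof -
    define D where "D = norm (x i T0 - x j T0)"
    have D: "D \<le> 2 * S" unfolding D_def using norm_triangle_ineq4[of "x i T0" "x j T0"] xS[OF ij(1)] xS[OF ij(2)] by linarith
    have "norm (x i t - x j t) < D + 1 + (2 * B + 1) * (t - T0)"
    proof (rule barrier_norm[where u' = "\<lambda>t. v i t - v j t" and \<Phi> = "\<lambda>t. D + 1 + (2 * B + 1) * (t - T0)"
          and \<Phi>' = "\<lambda>_. 2 * B + 1", OF _ _ _ _ _ tt])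
      show "((\<lambda>t. x i t - x j t) has_vector_derivative v i t - v j t) (at t)" if "T0 \<le> t" for t
        using dx[OF ij(1), of t] dx[OF ij(2), of t] that T0 by (intro has_vector_derivative_diff) auto
      show "((\<lambda>t. D + 1 + (2 * B + 1) * (t - T0)) has_real_derivative 2 * B + 1) (at t)" for t
        by (auto intro!: derivative_eq_intros)
      show "D + 1 + (2 * B + 1) * (t - T0) > 0" if "T0 \<le> t" for t
      proof -
        have "(2 * B + 1) * (t - T0) \<ge> 0" using that B(2) by (intro mult_nonneg_nonneg) auto
        thus ?thesis unfolding D_def using norm_ge_zero[of "x i T0 - x j T0"] by linarith
      qed
      show "norm (x i T0 - x j T0) < D + 1 + (2 * B + 1) * (T0 - T0)" by (simp add: D_def)
      fix s assume s: "T0 < s" "norm (x i s - x j s) = D + 1 + (2 * B + 1) * (s - T0)"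
      have pos: "D + 1 + (2 * B + 1) * (s - T0) > 0"
      proof -
        have "(2 * B + 1) * (s - T0) \<ge> 0" using s B(2) by (intro mult_nonneg_nonneg) auto
        thus ?thesis unfolding D_def using norm_ge_zero[of "x i T0 - x j T0"] by linarith
      qed
      have "inner (x i s - x j s) (v i s - v j s) \<le> norm (x i s - x j s) * norm (v i s - v j s)"
        by (rule norm_cauchy_schwarz)
      also have "\<dots> \<le> (D + 1 + (2 * B + 1) * (s - T0)) * (2 * B)"
      proof -
        have "norm (v i s - v j s) \<le> 2 * B"
          using norm_triangle_ineq4[of "v i s" "v j s"] B(1)[OF ij(1), of s] B(1)[OF ij(2), of s] s by linarith
        thus ?thesis using s(2) pos by (simp add: mult_left_mono)
      qed
      also have "\<dots> < (D + 1 + (2 * B + 1) * (s - T0)) * (2 * B + 1)" using pos by simp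
      finally show "inner (x i s - x j s) (v i s - v j s) < (D + 1 + (2 * B + 1) * (s - T0)) * (2 * B + 1)" .
    qed
    also have "\<dots> \<le> K0 * (1 + t)"
    proof -
      have "0 \<le> S * t" "0 \<le> B * t" "0 \<le> B * T0" "0 \<le> T0" using Snn B(2) tt T0 by auto
      moreover have "K0 * (1 + t) = 2*S + 2*B + 2 + 2*(S*t) + 2*(B*t) + 2*t" by (simp add: K0_def algebra_simps)
      moreover have "(2 * B + 1) * (t - T0) = 2*(B*t) + t - 2*(B*T0) - T0" by (simp add: algebra_simps)
      ultimately show ?thesis using D tt B(2) by linarith
    qed
    finally show ?thesis by simp
  qed
  define c where "c = H / (1 + K0^2) powr \<beta>"
  define \<gamma> where "\<gamma> = 2 * \<beta>"
  have cpos: "c > 0"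
  proof -
    have "1 + K0^2 > 0" by (simp add: add_pos_nonneg)
    thus ?thesis using H unfolding c_def by (intro divide_pos_pos) auto
  qed
  have \<gamma>: "0 < \<gamma>" "\<gamma> < 1" using beta by (auto simp: \<gamma>_def)
  have alow: "a i j t \<ge> c * (1 + t) powr (-\<gamma>)" if ij: "i \<le> k" "j \<le> k" and tt: "t \<ge> T0" for i j t
  proof -
    define n where "n = norm (x i t - x j t)"
    have ypos: "1 + t > 0" using tt T0 by simp
    have K0nn: "K0 \<ge> 0" using Snn B(2) by (simp add: K0_def)
    have "n^2 \<le> (K0 * (1 + t))^2" unfolding n_def using xgrow[OF ij tt] by (intro power_mono) auto
    moreover have "1 \<le> (1 + t)^2" using tt T0 by (simp add: one_le_power)
    moreover have "(K0 * (1 + t))^2 = K0^2 * (1 + t)^2" by (simp add: power_mult_distrib)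
    moreover have "(1 + K0^2) * (1 + t)^2 = (1 + t)^2 + K0^2 * (1 + t)^2" by (simp add: algebra_simps)
    ultimately have le: "1 + n^2 \<le> (1 + K0^2) * (1 + t)^2" by linarith
    have "(1 + n^2) powr \<beta> \<le> ((1 + K0^2) * (1 + t)^2) powr \<beta>"
      using le beta by (intro powr_mono2) auto
    also have "\<dots> = (1 + K0^2) powr \<beta> * (1 + t) powr \<gamma>"
    proof -
      have "(1 + t)^2 = (1 + t) powr 2" using powr_realpow[of "1 + t" 2] ypos by simp
      hence "((1 + t)^2) powr \<beta> = (1 + t) powr \<gamma>" by (simp add: powr_powr \<gamma>_def)
      thus ?thesis by (simp add: powr_mult)
    qed
    finally have P: "(1 + n^2) powr \<beta> \<le> (1 + K0^2) powr \<beta> * (1 + t) powr \<gamma>" .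
    have "1 + n^2 > 0" by (simp add: add_pos_nonneg)
    hence Ppos: "(1 + n^2) powr \<beta> > 0" by simp
    have "c * (1 + t) powr (-\<gamma>) = H / ((1 + K0^2) powr \<beta> * (1 + t) powr \<gamma>)"
      by (simp add: c_def powr_minus divide_inverse)
    also have "\<dots> \<le> H / (1 + n^2) powr \<beta>"
      using P Ppos H by (intro divide_left_mono) (auto intro!: mult_pos_pos)
    finally show ?thesis by (simp add: a_def n_def)
  qed
  have "\<forall>n. n \<le> k \<longrightarrow> (\<exists>M T. T \<ge> T0 \<and> M \<ge> 0 \<and>
          (\<forall>j\<le>n. \<forall>t\<ge>T. norm (v j t - v 0 t) \<le> M * (1 + t) powr (-(\<mu> - real n))))"
  proof (intro allI)
    fix n show "n \<le> k \<longrightarrow> (\<exists>M T. T \<ge> T0 \<and> M \<ge> 0 \<and>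
          (\<forall>j\<le>n. \<forall>t\<ge>T. norm (v j t - v 0 t) \<le> M * (1 + t) powr (-(\<mu> - real n))))"
    proof (induction n)
      case 0 show ?case by (intro impI exI[of _ 0] exI[of _ T0]) auto
    next
      case (Suc n)
      show ?case
      proof
        assume nk: "Suc n \<le> k"
        then obtain M T where MT: "T \<ge> T0" "M \<ge> 0"
          "\<And>j t. j \<le> n \<Longrightarrow> t \<ge> T \<Longrightarrow> norm (v j t - v 0 t) \<le> M * (1 + t) powr (-(\<mu> - real n))"
          using Suc.IH by auto
        define i where "i = Suc n"
        have i: "1 \<le> i" "i \<le> k" using nk by (auto simp: i_def)
        define q where "q = \<mu> - real i"
        have q: "q > 0" using mu nk by (simp add: q_def i_def)
        have pq: "-(\<mu> - real n) = -q - 1" by (simp add: q_def i_def)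
        define G where "G = real k * H * M + F"
        have G: "G \<ge> 0" unfolding G_def using H MT(2) Fpos by simp
        define Y0 where "Y0 = ((q + 1) / c) powr (1 / (1 - \<gamma>))"
        define T1 where "T1 = max T Y0"
        have T1: "T1 \<ge> T" "T1 \<ge> T0" "T1 \<ge> 1" using MT(1) T0 by (auto simp: T1_def)
        have cz: "c * (1 + t) powr (1 - \<gamma>) \<ge> q + 1" if "t \<ge> T1" for t
        proof -
          have "Y0 \<le> 1 + t" using that by (simp add: T1_def)
          hence "Y0 powr (1 - \<gamma>) \<le> (1 + t) powr (1 - \<gamma>)" using \<gamma> by (intro powr_mono2) (auto simp: Y0_def)
          moreover have "Y0 powr (1 - \<gamma>) = (q + 1) / c"
          proof -
            have "Y0 powr (1 - \<gamma>) = ((q + 1) / c) powr (1 / (1 - \<gamma>) * (1 - \<gamma>))" by (simp add: Y0_def powr_powr)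
            also have "1 / (1 - \<gamma>) * (1 - \<gamma>) = 1" using \<gamma> by simp
            finally show ?thesis using q cpos by (simp add: powr_one)
          qed
          ultimately have "(q + 1) / c \<le> (1 + t) powr (1 - \<gamma>)" by simp
          thus ?thesis using cpos by (simp add: divide_le_eq mult.commute)
        qed
        define Mi where "Mi = max (G + 1) (norm (v i T1 - v 0 T1) * (1 + T1) powr q + 1)"
        have Mi: "Mi > 0" "Mi > G" using G by (auto simp: Mi_def)
        have bnd: "norm (v i t - v 0 t) < Mi * (1 + t) powr (-q)" if "t \<ge> T1" for t
        proof (rule barrier_norm[where u' = "\<lambda>t. (\<Sum>j\<in>L i. a i j t *\<^sub>R (v j t - v i t)) - f t"
              and \<Phi> = "\<lambda>t. Mi * (1 + t) powr (-q)" and \<Phi>' = "\<lambda>t. Mi * (- q * (1 + t) powr (- q - 1))", OF _ _ _ _ _ that])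
          show "((\<lambda>t. v i t - v 0 t) has_vector_derivative (\<Sum>j\<in>L i. a i j t *\<^sub>R (v j t - v i t)) - f t) (at t)"
            if "T1 \<le> t" for t
            using dvi[OF i, of t] dv0[of t] that T1 by (intro has_vector_derivative_diff) auto
          show "((\<lambda>t. Mi * (1 + t) powr (-q)) has_real_derivative Mi * (- q * (1 + t) powr (- q - 1))) (at t)"
            if "T1 \<le> t" for t
            using that T1 by (auto intro!: derivative_eq_intros)
          show "Mi * (1 + t) powr (-q) > 0" if "T1 \<le> t" for t using that T1 Mi by simp
          show "norm (v i T1 - v 0 T1) < Mi * (1 + T1) powr (-q)"
          proof -
            have yp: "(1 + T1) powr q * (1 + T1) powr (-q) = 1" using T1 by (simp add: powr_add[symmetric])
            have "norm (v i T1 - v 0 T1) + (1 + T1) powr (-q) = (norm (v i T1 - v 0 T1) * (1 + T1) powr q + 1) * (1 + T1) powr (-q)"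
              using yp by (simp add: algebra_simps)
            also have "\<dots> \<le> Mi * (1 + T1) powr (-q)"
              by (intro mult_right_mono) (auto simp: Mi_def)
            moreover have "(1 + T1) powr (-q) > 0" using T1 by simp
            ultimately show ?thesis by linarith
          qed
          fix t assume t: "T1 < t" "norm (v i t - v 0 t) = Mi * (1 + t) powr (-q)"
          define y where "y = 1 + t"
          have y: "y > 0" "y \<ge> 1" using t T1 by (auto simp: y_def)
          define s where "s = y powr (-q)"
          have spos: "s > 0" using y by (simp add: s_def)
          define z where "z = y powr (1 - \<gamma>)"
          define u where "u = v i t - v 0 t"
          define r where "r = norm u"
          have r: "r = Mi * s" using t(2) by (simp add: r_def u_def s_def y_def)
          have rnn: "r \<ge> 0" by (simp add: r_def)
          define E where "E = M * y powr (-q - 1)"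
          have Enn: "E \<ge> 0" using MT(2) by (simp add: E_def)
          have wj: "norm (v j t - v 0 t) \<le> E" if "j \<le> n" for j
            using MT(3)[OF that, of t] t T1 pq by (simp add: E_def y_def)
          have uu: "inner u u = r^2" by (simp add: r_def power2_norm_eq_inner)
          have "inner u ((\<Sum>j\<in>L i. a i j t *\<^sub>R (v j t - v i t)) - f t)
              = (\<Sum>j\<in>L i. a i j t * (inner u (v j t - v 0 t) - r^2)) - inner u (f t)"
          proof -
            have e: "inner u (v j t - v i t) = inner u (v j t - v 0 t) - r^2" for j
            proof -
              have "v j t - v i t = (v j t - v 0 t) - u" by (simp add: u_def)
              hence "inner u (v j t - v i t) = inner u (v j t - v 0 t) - inner u u"
                by (simp only: inner_diff_right)
              thus ?thesis by (simp add: uu)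
            qed
            show ?thesis by (simp add: inner_diff_right[of u _ "f t"] inner_sum_right e)
          qed
          also have "\<dots> \<le> (\<Sum>j\<in>L i. H * (r * E) - a i j t * r^2) + r * (F * y powr (-q - 1))"
          proof -
            have A: "(\<Sum>j\<in>L i. a i j t * (inner u (v j t - v 0 t) - r^2)) \<le> (\<Sum>j\<in>L i. H * (r * E) - a i j t * r^2)"
            proof (rule sum_mono)
              fix j assume j: "j \<in> L i"
              hence jn: "j \<le> n" using Lfacts(3)[OF i] by (auto simp: i_def)
              have "inner u (v j t - v 0 t) \<le> r * norm (v j t - v 0 t)" unfolding r_def by (rule norm_cauchy_schwarz)
              also have "\<dots> \<le> r * E" using wj[OF jn] rnn by (simp add: mult_left_mono)
              finally have "a i j t * inner u (v j t - v 0 t) \<le> a i j t * (r * E)"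
                using a_pos[of i j t] by (intro mult_left_mono) auto
              also have "\<dots> \<le> H * (r * E)" using a_le[of i j t] rnn Enn by (intro mult_right_mono) auto
              finally show "a i j t * (inner u (v j t - v 0 t) - r^2) \<le> H * (r * E) - a i j t * r^2"
                by (simp add: algebra_simps)
            qed
            have "- inner u (f t) \<le> r * norm (f t)"
              using norm_cauchy_schwarz[of u "- f t"] by (simp add: r_def)
            also have "\<dots> \<le> r * (F * y powr (-q - 1))"
            proof (rule mult_left_mono[OF _ rnn])
              have "norm (f t) \<le> F * y powr (-\<mu>)" using fbound[of t] t T1 by (simp add: y_def)
              also have "\<dots> \<le> F * y powr (-q - 1)"
                using Fpos y by (intro mult_left_mono powr_mono) (auto simp: q_def i_def)
              finally show "norm (f t) \<le> F * y powr (-q - 1)" .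
            qed
            finally have "- inner u (f t) \<le> r * (F * y powr (-q - 1))" .
            with A show ?thesis by linarith
          qed
          also have "\<dots> \<le> r * (G * y powr (-q - 1)) - c * y powr (-\<gamma>) * r^2"
          proof -
            have "(\<Sum>j\<in>L i. H * (r * E) - a i j t * r^2) = real (card (L i)) * (H * (r * E)) - (\<Sum>j\<in>L i. a i j t) * r^2"
              by (simp add: sum_subtractf sum_distrib_right)
            moreover have "real (card (L i)) * (H * (r * E)) \<le> real k * (H * (r * E))"
              using Lfacts(4)[OF i] H rnn Enn by (intro mult_right_mono) auto
            moreover have "(\<Sum>j\<in>L i. a i j t) \<ge> c * y powr (-\<gamma>)"
            proof -
              obtain j0 where j0: "j0 \<in> L i" using Lfacts(1)[OF i] by blast
              have "a i j0 t \<le> (\<Sum>j\<in>L i. a i j t)"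
                using j0 Lfacts(2)[OF i] a_pos by (intro member_le_sum) (auto intro: less_imp_le)
              moreover have "j0 \<le> k" using j0 Lfacts(3)[OF i] i by auto
              hence "a i j0 t \<ge> c * y powr (-\<gamma>)" using alow[OF i(2), of j0 t] t T1 by (simp add: y_def)
              ultimately show ?thesis by linarith
            qed
            hence "(\<Sum>j\<in>L i. a i j t) * r^2 \<ge> c * y powr (-\<gamma>) * r^2" by (rule mult_right_mono) simp
            moreover have "real k * (H * (r * E)) + r * (F * y powr (-q - 1)) = r * (G * y powr (-q - 1))"
              by (simp add: G_def E_def algebra_simps)
            ultimately show ?thesis by linarith
          qed
          also have "\<dots> = Mi * s * (G * (s / y)) - c * (z / y) * (Mi * s)^2"
          proof -
            have "y powr (-q - 1) = s / y" using y by (simp add: s_def powr_m1)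
            moreover have "y powr (-\<gamma>) = z / y" using y by (simp add: z_def powr_diff powr_minus_divide)
            ultimately show ?thesis by (simp add: r)
          qed
          also have "\<dots> < Mi * s * (Mi * (-q) * (s / y))"
            using Mi spos y cz[of t] t by (intro key_alg) (auto simp: z_def y_def)
          also have "\<dots> = Mi * (1 + t) powr (-q) * (Mi * (- q * (1 + t) powr (- q - 1)))"
            using y by (simp add: s_def y_def powr_m1)
          finally show "inner (v i t - v 0 t) ((\<Sum>j\<in>L i. a i j t *\<^sub>R (v j t - v i t)) - f t)
              < Mi * (1 + t) powr (-q) * (Mi * (- q * (1 + t) powr (- q - 1)))" by (simp add: u_def)
        qed
        show "\<exists>M T. T \<ge> T0 \<and> M \<ge> 0 \<and>
          (\<forall>j\<le>Suc n. \<forall>t\<ge>T. norm (v j t - v 0 t) \<le> M * (1 + t) powr (-(\<mu> - real (Suc n))))"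
        proof -
          have main: "norm (v j t - v 0 t) \<le> max M Mi * (1 + t) powr (-(\<mu> - real (Suc n)))"
            if j: "j \<le> Suc n" and t: "T1 \<le> t" for j t
          proof -
          have yq: "(1 + t) powr (-(\<mu> - real (Suc n))) = (1 + t) powr (-q)" by (simp add: q_def i_def)
          show "norm (v j t - v 0 t) \<le> max M Mi * (1 + t) powr (-(\<mu> - real (Suc n)))"
          proof (cases "j = Suc n")
            case True
            have "norm (v j t - v 0 t) \<le> Mi * (1 + t) powr (-q)" using bnd[OF t] True by (simp add: i_def)
            also have "\<dots> \<le> max M Mi * (1 + t) powr (-q)" by (intro mult_right_mono) auto
            finally show ?thesis using yq by simp
          next
            case False
            hence "j \<le> n" using j by simp
            hence "norm (v j t - v 0 t) \<le> M * (1 + t) powr (-(\<mu> - real n))" using MT(3) t T1 by simp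
            also have "\<dots> \<le> M * (1 + t) powr (-(\<mu> - real (Suc n)))"
              using MT(2) t T1 by (intro mult_left_mono powr_mono) auto
            also have "\<dots> \<le> max M Mi * (1 + t) powr (-(\<mu> - real (Suc n)))" by (intro mult_right_mono) auto
            finally show ?thesis .
          qed
          qed
          show ?thesis using main T1 MT(2) by (intro exI[of _ "max M Mi"] exI[of _ T1]) auto
        qed
      qed
    qed
  qed
  from this[rule_format, OF order_refl] obtain M T where MT: "T \<ge> T0" "M \<ge> 0"
    "\<And>j t. j \<le> k \<Longrightarrow> t \<ge> T \<Longrightarrow> norm (v j t - v 0 t) \<le> M * (1 + t) powr (-(\<mu> - real k))"
    by blast
  show ?thesis
  proof (rule bigoI[of _ "2 * M"])
    show "\<forall>\<^sub>F t in at_top. norm (MAX i\<in>{0..k}. MAX j\<in>{0..k}. norm (v i t - v j t))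
            \<le> 2 * M * norm ((1 + t) powr (-(\<mu> - real k)))"
      unfolding eventually_at_top_linorder
    proof (intro exI allI impI)
      fix t assume t: "t \<ge> T"
      have le: "norm (v i t - v j t) \<le> 2 * M * (1 + t) powr (-(\<mu> - real k))" if "i \<le> k" "j \<le> k" for i j
      proof -
        have "norm (v i t - v j t) \<le> norm (v i t - v 0 t) + norm (v j t - v 0 t)"
          using norm_triangle_ineq4[of "v i t - v 0 t" "v j t - v 0 t"] by simp
        also have "\<dots> \<le> 2 * M * (1 + t) powr (-(\<mu> - real k))"
          using MT(3)[OF that(1) t] MT(3)[OF that(2) t] by simp
        finally show ?thesis .
      qed
      have "(MAX i\<in>{0..k}. MAX j\<in>{0..k}. norm (v i t - v j t)) \<le> 2 * M * (1 + t) powr (-(\<mu> - real k))"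
        using le by (simp add: Max_le_iff)
      moreover have "(MAX i\<in>{0..k}. MAX j\<in>{0..k}. norm (v i t - v j t)) \<ge> 0"
        by (simp add: Max_ge_iff) (use t in auto)
      moreover have "(1 + t) powr (-(\<mu> - real k)) \<ge> 0" by simp
      ultimately show "norm (MAX i\<in>{0..k}. MAX j\<in>{0..k}. norm (v i t - v j t))
            \<le> 2 * M * norm ((1 + t) powr (-(\<mu> - real k)))" by simp
    qed
  qed
qed

end
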